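(* Let $\mathbb{F}\in\{\mathbb{R},\mathbb{C}\}$, let $A$ be an $n\times m$ matrix over $\mathbb{F}$, let $\rho=\|A\|_{1,\infty}$ be the largest absolute value of the entries of $A$, and suppose every entry of $A$ of absolute value $\rho$ is the only nonzero element of its row and of its column. Let $C$ be obtained from $A$ by replacing all entries of absolute value $\rho$ by $0$ (so $\|C\|_{1,\infty}<\rho$). If $p\in(1,\infty]$ and $q\in[1,\infty)$ satisfy $p\le q$ and $$m^{1-(1/p)}\,n^{1/q}\,\|C\|_{1,\infty}\le\rho,$$ then $A\in\mathcal{E}_{1,\infty}(p,q)$. This inequality is satisfied if $p$ is sufficiently close to $1$ and $q$ is sufficiently large.
   Context: $\|x\|_p$ is the Hölder $\ell_p$ norm; $\|A\|_{p,q}=\max_{x\in\mathbb{F}^m,x\ne0}\|Ax\|_q/\|x\|_p$ (for real $A$ one may use $\mathbb{F}=\mathbb{R}$ or $\mathbb{C}$); $1/\infty=0$. For $p\in(1,\infty]$, $q\in[1,\infty)$, $\mathcal{E}_{1,\infty}(p,q)$ is the set of $n\times m$ matrices $A$ with $\|A\|_{r,s}=\|A\|_{p,q}$ for all $r\in[1,p)$ and $s\in(q,\infty]$. *)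

theory Defs
  imports "HOL-Analysis.Analysis"
begin

text \<open>Vectors in F^k are 'a^'k, and an n x m matrix is 'a^'m^'n
  (rows indexed by 'n, columns by 'm), with 'a = real or complex
  (any real normed field).\<close>

definition ereal_recip :: "ereal \<Rightarrow> real" where
  "ereal_recip p = (if p = \<infinity> then 0 else 1 / real_of_ereal p)"

definition lpnorm :: "ereal \<Rightarrow> ('a::real_normed_vector)^'k \<Rightarrow> real" where
  "lpnorm p x =
     (if p = \<infinity> then Max (range (\<lambda>i. norm (x $ i)))
      else (\<Sum>i\<in>UNIV. norm (x $ i) powr real_of_ereal p) powr (1 / real_of_ereal p))"

definition opnorm :: "ereal \<Rightarrow> ereal \<Rightarrow> ('a::real_normed_field)^'m^'n \<Rightarrow> real" where
  "opnorm p q A = Sup {lpnorm q (A *v x) / lpnorm p x | x. x \<noteq> 0}"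

definition E1inf :: "ereal \<Rightarrow> ereal \<Rightarrow> (('a::real_normed_field)^'m^'n) set" where
  "E1inf p q = {A. \<forall>r s. 1 \<le> r \<and> r < p \<and> q < s \<and> s \<le> \<infinity> \<longrightarrow> opnorm r s A = opnorm p q A}"

end

theory Submission
  imports Defs
begin


lemma lp_mono_sum:
  fixes a :: "'i \<Rightarrow> real"
  assumes K: "finite K" and a0: "\<And>j. j\<in>K \<Longrightarrow> a j \<ge> 0" and P: "0 < P" and PQ: "P \<le> Q"
  shows "(\<Sum>j\<in>K. a j powr Q) powr (1/Q) \<le> (\<Sum>j\<in>K. a j powr P) powr (1/P)"
proof -
  define X where "X = (\<Sum>j\<in>K. a j powr P)"
  define S where "S = X powr (1/P)"
  have X0: "X \<ge> 0" unfolding X_def by (intro sum_nonneg) auto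
  have S0: "S \<ge> 0" unfolding S_def by simp
  have XS: "X = S powr P" unfolding S_def using X0 P by (simp add: powr_powr)
  have aS: "a j \<le> S" if j: "j\<in>K" for j
  proof -
    have "a j powr P \<le> X" unfolding X_def using j K a0 by (intro member_le_sum) auto
    then have "(a j powr P) powr (1/P) \<le> X powr (1/P)" using P by (intro powr_mono2) auto
    then show ?thesis using a0[OF j] P by (simp add: powr_powr S_def)
  qed
  have "a j powr Q \<le> a j powr P * S powr (Q-P)" if j: "j\<in>K" for j
  proof -
    have "a j powr Q = a j powr P * a j powr (Q-P)" by (simp flip: powr_add)
    also have "\<dots> \<le> a j powr P * S powr (Q-P)"
      using aS[OF j] a0[OF j] PQ by (intro mult_left_mono powr_mono2) auto
    finally show ?thesis .
  qed
  then have "(\<Sum>j\<in>K. a j powr Q) \<le> (\<Sum>j\<in>K. a j powr P * S powr (Q-P))" by (intro sum_mono)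
  also have "\<dots> = X * S powr (Q-P)" unfolding X_def by (simp add: sum_distrib_right)
  also have "\<dots> = S powr Q" using XS by (simp flip: powr_add)
  finally have "(\<Sum>j\<in>K. a j powr Q) \<le> S powr Q" .
  then have "(\<Sum>j\<in>K. a j powr Q) powr (1/Q) \<le> (S powr Q) powr (1/Q)"
    using P PQ by (intro powr_mono2) (auto intro: sum_nonneg)
  also have "\<dots> = S" using S0 P PQ by (simp add: powr_powr)
  finally show ?thesis unfolding S_def X_def .
qed

lemma sum_le_card_powr:
  fixes a :: "'i \<Rightarrow> real"
  assumes K: "finite K" and a0: "\<And>j. j\<in>K \<Longrightarrow> a j \<ge> 0" and P: "1 < P"
  shows "(\<Sum>j\<in>K. a j) \<le> real (card K) powr (1 - 1/P) * (\<Sum>j\<in>K. a j powr P) powr (1/P)"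
proof (cases "K = {} \<or> (\<Sum>j\<in>K. a j powr P) = 0")
  case True
  then show ?thesis
  proof
    assume "K = {}" then show ?thesis by simp
  next
    assume h: "(\<Sum>j\<in>K. a j powr P) = 0"
    have "\<forall>j\<in>K. a j powr P = 0" using sum_nonneg_eq_0_iff[OF K, of "\<lambda>j. a j powr P"] h by simp
    then have "\<forall>j\<in>K. a j = 0" by simp
    then show ?thesis by simp
  qed
next
  case False
  then have Kne: "K \<noteq> {}" and X0: "(\<Sum>j\<in>K. a j powr P) \<noteq> 0" by auto
  define X where "X = (\<Sum>j\<in>K. a j powr P)"
  define k where "k = real (card K)"
  have kpos: "k > 0" unfolding k_def using K Kne by (simp add: card_gt_0_iff)
  have Xpos: "X > 0" unfolding X_def using X0 a0 by (metis order_le_neq_trans powr_ge_zero sum_nonneg)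
  define S where "S = (X / k) powr (1/P)"
  have Spos: "S > 0" unfolding S_def using Xpos kpos by simp
  have SP: "S powr P = X / k" unfolding S_def using Xpos kpos P by (simp add: powr_powr)
  define P' where "P' = P / (P - 1)"
  have P': "P' > 1" "1/P + 1/P' = 1" unfolding P'_def using P by (auto simp: field_simps)
  have y: "a j / S \<le> (a j / S) powr P / P + 1 / P'" if j: "j \<in> K" for j
    using Youngs_inequality[OF P P'(1) P'(2), of "a j / S" 1] a0[OF j] Spos by simp
  have "(\<Sum>j\<in>K. a j / S) \<le> (\<Sum>j\<in>K. (a j / S) powr P / P + 1 / P')"
    using y by (intro sum_mono)
  also have "\<dots> = (\<Sum>j\<in>K. a j powr P) / S powr P / P + k / P'"
    using a0 Spos by (simp add: sum.distrib sum_divide_distrib powr_divide k_def)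
  also have "\<dots> = k / P + k / P'"
  proof -
    have "X / S powr P = k" using SP Xpos kpos by simp
    then show ?thesis unfolding X_def by simp
  qed
  also have "\<dots> = k * (1/P + 1/P')" by (simp add: algebra_simps)
  also have "\<dots> = k" using P'(2) by simp
  finally have "(\<Sum>j\<in>K. a j) / S \<le> k" by (simp add: sum_divide_distrib)
  then have "(\<Sum>j\<in>K. a j) \<le> k * S" using Spos by (simp add: field_simps)
  also have "k * S = k powr (1 - 1/P) * X powr (1/P)"
  proof -
    have "k * S = k powr 1 * (X powr (1/P) / k powr (1/P))" unfolding S_def using kpos Xpos
      by (simp add: powr_divide)
    also have "\<dots> = k powr (1 - 1/P) * X powr (1/P)" using kpos
      by (simp add: powr_diff)
    finally show ?thesis .
  qed
  finally show ?thesis unfolding k_def X_def .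
qed



lemma lpnorm_fin: "p \<noteq> \<infinity> \<Longrightarrow> lpnorm p x = (\<Sum>i\<in>UNIV. norm (x $ i) powr real_of_ereal p) powr (1 / real_of_ereal p)"
  by (simp add: lpnorm_def)

lemma lpnorm_inf: "lpnorm \<infinity> x = Max (range (\<lambda>i. norm (x $ i)))"
  by (simp add: lpnorm_def)

lemma ereal_ge1_real: "1 \<le> p \<Longrightarrow> p \<noteq> \<infinity> \<Longrightarrow> 1 \<le> real_of_ereal p"
  by (cases p) auto

lemma norm_le_lpnorm:
  fixes x :: "('a::real_normed_vector)^'k"
  assumes "1 \<le> p" shows "norm (x $ i) \<le> lpnorm p x"
proof (cases "p = \<infinity>")
  case True then show ?thesis by (simp add: lpnorm_inf)
next
  case False
  define P where "P = real_of_ereal p"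
  have P: "1 \<le> P" unfolding P_def using assms False by (rule ereal_ge1_real)
  have "norm (x $ i) powr P \<le> (\<Sum>i\<in>UNIV. norm (x $ i) powr P)"
    by (intro member_le_sum) auto
  then have "(norm (x $ i) powr P) powr (1/P) \<le> (\<Sum>i\<in>UNIV. norm (x $ i) powr P) powr (1/P)"
    using P by (intro powr_mono2) auto
  then show ?thesis using P False by (simp add: lpnorm_fin powr_powr P_def)
qed

lemma lpnorm_nonneg: "1 \<le> p \<Longrightarrow> 0 \<le> lpnorm p x"
  using norm_le_lpnorm[of p x] norm_ge_zero order_trans by blast

lemma lpnorm_pos:
  fixes x :: "('a::real_normed_vector)^'k"
  assumes "1 \<le> p" "x \<noteq> 0" shows "0 < lpnorm p x"
proof -
  obtain i where "x $ i \<noteq> 0" using assms(2) by (auto simp: vec_eq_iff)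
  then show ?thesis using norm_le_lpnorm[OF assms(1), of x i] by (metis less_le_trans zero_less_norm_iff)
qed

lemma lpnorm_mono:
  fixes x :: "('a::real_normed_vector)^'k"
  assumes a: "1 \<le> a" "a \<noteq> \<infinity>" and ab: "a \<le> b"
  shows "lpnorm b x \<le> lpnorm a x"
proof (cases "b = \<infinity>")
  case True
  then show ?thesis by (auto simp: lpnorm_inf intro: norm_le_lpnorm[OF a(1)])
next
  case False
  have A: "1 \<le> real_of_ereal a" using a by (rule ereal_ge1_real)
  have "real_of_ereal a \<le> real_of_ereal b" using a ab False
    by (cases a; cases b) auto
  then show ?thesis using lp_mono_sum[of UNIV "\<lambda>i. norm (x $ i)" "real_of_ereal a" "real_of_ereal b"] A a False
    by (simp add: lpnorm_fin)
qed

lemma lpnorm_axis: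
  fixes c :: "'a::real_normed_vector"
  assumes "1 \<le> p" shows "lpnorm p (axis i c :: 'a^'k) = norm c"
proof (cases "p = \<infinity>")
  case True
  have "Max (range (\<lambda>j. norm ((axis i c :: 'a^'k) $ j))) = norm c"
    by (rule Max_eqI) (auto simp: axis_def)
  then show ?thesis using True by (simp add: lpnorm_inf)
next
  case False
  define P where "P = real_of_ereal p"
  have P: "1 \<le> P" unfolding P_def using assms False by (rule ereal_ge1_real)
  have "(\<Sum>j\<in>UNIV. norm ((axis i c :: 'a^'k) $ j) powr P) = (\<Sum>j\<in>UNIV. if j = i then norm c powr P else 0)"
    by (intro sum.cong) (auto simp: axis_def)
  also have "\<dots> = norm c powr P" by simp
  finally show ?thesis using False P by (simp add: lpnorm_fin P_def powr_powr)
qed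

lemma lpnorm_one: "lpnorm 1 x = (\<Sum>i\<in>UNIV. norm (x $ i))"
  by (simp add: lpnorm_fin abs_of_nonneg sum_nonneg)

lemma opnorm_eqI:
  fixes A :: "('a::real_normed_field)^'m^'n"
  assumes r: "1 \<le> r" and ub: "\<And>x. x \<noteq> 0 \<Longrightarrow> lpnorm s (A *v x) \<le> B * lpnorm r x"
    and z: "z \<noteq> 0" and att: "lpnorm s (A *v z) = B * lpnorm r z"
  shows "opnorm r s A = B"
  unfolding opnorm_def
proof (rule cSup_eq_maximum)
  have "lpnorm s (A *v z) / lpnorm r z = B" using att lpnorm_pos[OF r z] by simp
  then show "B \<in> {lpnorm s (A *v x) / lpnorm r x |x. x \<noteq> 0}" using z by blast
next
  fix y assume "y \<in> {lpnorm s (A *v x) / lpnorm r x |x. x \<noteq> 0}"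
  then obtain x where x: "x \<noteq> 0" "y = lpnorm s (A *v x) / lpnorm r x" by blast
  then show "y \<le> B" using ub[OF x(1)] lpnorm_pos[OF r x(1)] by (simp add: divide_le_eq)
qed

lemma mat_axis: "(M *v axis j (1::'a::real_normed_field)) $ i = M $ i $ j"
proof -
  have "(\<Sum>k\<in>UNIV. M $ i $ k * axis j 1 $ k) = (\<Sum>k\<in>UNIV. if k = j then M $ i $ j else 0)"
    by (intro sum.cong) (auto simp: axis_def)
  then show ?thesis by (simp add: matrix_vector_mult_def)
qed

definition maxent :: "('a::real_normed_field)^'m^'n \<Rightarrow> real" where
  "maxent M = Max (range (\<lambda>(i,j). norm (M $ i $ j)))"

lemma maxent_ge: "norm (M $ i $ j) \<le> maxent M"
  unfolding maxent_def by (rule Max_ge) auto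

lemma maxent_attained: "\<exists>i j. norm (M $ i $ j) = maxent M"
proof -
  have "maxent M \<in> range (\<lambda>(i,j). norm (M $ i $ j))"
    unfolding maxent_def by (rule Max_in) auto
  then obtain ij where "maxent M = (\<lambda>(i,j). norm (M $ i $ j)) ij" by blast
  then show ?thesis by (cases ij) auto
qed

lemma maxent_nonneg: "0 \<le> maxent M"
  using maxent_ge[of M] norm_ge_zero order_trans by blast

lemma opnorm_1_inf: "opnorm 1 \<infinity> M = maxent M"
proof -
  obtain i0 j0 where ij: "norm (M $ i0 $ j0) = maxent M" using maxent_attained by blast
  show ?thesis
  proof (rule opnorm_eqI[where z = "axis j0 1"])
    fix x :: "'a^'b" assume "x \<noteq> 0"
    have "norm ((M *v x) $ i) \<le> maxent M * lpnorm 1 x" for i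
    proof -
      have "norm ((M *v x) $ i) = norm (\<Sum>j\<in>UNIV. M $ i $ j * x $ j)"
        by (simp add: matrix_vector_mult_def)
      also have "\<dots> \<le> (\<Sum>j\<in>UNIV. norm (M $ i $ j) * norm (x $ j))"
        by (rule order_trans[OF norm_sum]) (simp add: norm_mult)
      also have "\<dots> \<le> (\<Sum>j\<in>UNIV. maxent M * norm (x $ j))"
        by (intro sum_mono mult_right_mono maxent_ge) auto
      finally show ?thesis by (simp add: lpnorm_one sum_distrib_left)
    qed
    then show "lpnorm \<infinity> (M *v x) \<le> maxent M * lpnorm 1 x"
      by (simp add: lpnorm_inf)
  next
    show "axis j0 (1::'a) \<noteq> 0" by (simp add: axis_eq_0_iff)
  next
    have "Max (range (\<lambda>i. norm ((M *v axis j0 1) $ i))) = maxent M"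
      by (rule Max_eqI) (auto simp: mat_axis maxent_ge, metis ij rangeI)
    then show "lpnorm \<infinity> (M *v axis j0 1) = maxent M * lpnorm 1 (axis j0 (1::'a) :: 'a^'b)"
      by (simp add: lpnorm_inf lpnorm_axis)
  qed simp
qed



lemma lp_mono_sum':
  fixes a :: "'i \<Rightarrow> real"
  assumes K: "finite K" and a0: "\<And>j. j\<in>K \<Longrightarrow> a j \<ge> 0" and P: "0 < P" and PQ: "P \<le> Q"
  shows "(\<Sum>j\<in>K. a j powr Q) \<le> (\<Sum>j\<in>K. a j powr P) powr (Q/P)"
proof -
  have s0: "0 \<le> (\<Sum>j\<in>K. a j powr Q)" by (intro sum_nonneg) auto
  have "((\<Sum>j\<in>K. a j powr Q) powr (1/Q)) powr Q \<le> ((\<Sum>j\<in>K. a j powr P) powr (1/P)) powr Q"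
    using lp_mono_sum[OF assms] P PQ by (intro powr_mono2) auto
  then show ?thesis using s0 P PQ by (simp add: powr_powr)
qed

lemma powr_superadd:
  fixes u v k :: real
  assumes "0 \<le> u" "0 \<le> v" "1 \<le> k"
  shows "u powr k + v powr k \<le> (u + v) powr k"
proof -
  have e: "w powr k = w * w powr (k - 1)" if "0 \<le> w" for w :: real
  proof -
    have "w powr k = w powr (1 + (k - 1))" by simp
    also have "\<dots> = w powr 1 * w powr (k-1)" by (rule powr_add)
    finally show ?thesis using that by simp
  qed
  have "u powr k + v powr k = u * u powr (k-1) + v * v powr (k-1)" using assms by (simp add: e)
  also have "\<dots> \<le> u * (u+v) powr (k-1) + v * (u+v) powr (k-1)"
    using assms by (intro add_mono mult_left_mono powr_mono2) auto
  also have "\<dots> = (u+v) powr k" using assms by (simp add: e distrib_right)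
  finally show ?thesis .
qed



lemma main_bound:
  fixes A :: "('a::real_normed_field)^'m^'n" and x :: "'a^'m"
  assumes rpos: "\<rho> > 0"
  and isol: "\<And>i j. norm (A$i$j) = \<rho> \<Longrightarrow> (\<forall>j'. j'\<noteq>j \<longrightarrow> A$i$j' = 0) \<and> (\<forall>i'. i'\<noteq>i \<longrightarrow> A$i'$j = 0)"
  and P: "1 < P" and PQ: "P \<le> Q"
  and c: "c \<ge> 0" "\<And>i j. norm (A$i$j) \<noteq> \<rho> \<Longrightarrow> norm (A$i$j) \<le> c"
  and ineq: "real CARD('m) powr (1 - 1/P) * real CARD('n) powr (1/Q) * c \<le> \<rho>"
  shows "(\<Sum>i\<in>UNIV. norm ((A *v x)$i) powr Q) powr (1/Q) \<le> \<rho> * (\<Sum>j\<in>UNIV. norm (x$j) powr P) powr (1/P)"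
proof -
  define I where "I = {i. \<exists>j. norm (A$i$j) = \<rho>}"
  define J where "J = {j. \<exists>i. norm (A$i$j) = \<rho>}"
  define \<sigma> where "\<sigma> i = (SOME j. norm (A$i$j) = \<rho>)" for i
  define a where "a j = norm (x$j)" for j
  define ny where "ny i = norm ((A *v x)$i)" for i
  have Q: "1 < Q" using P PQ by simp
  have a0: "a j \<ge> 0" for j by (simp add: a_def)
  have f1: "norm (A$i$\<sigma> i) = \<rho>" if "i \<in> I" for i
    using that unfolding I_def \<sigma>_def by (auto intro: someI)
  have f1': "\<sigma> i \<in> J" if "i \<in> I" for i using f1[OF that] unfolding J_def by blast
  have f2: "ny i = \<rho> * a (\<sigma> i)" if "i \<in> I" for i
  proof -
    have "(\<Sum>k\<in>UNIV. A$i$k * x$k) = (\<Sum>k\<in>UNIV. if k = \<sigma> i then A$i$\<sigma> i * x$\<sigma> i else 0)"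
      using isol[OF f1[OF that]] by (intro sum.cong) auto
    then have "(A *v x)$i = A$i$\<sigma> i * x$\<sigma> i" by (simp add: matrix_vector_mult_def)
    then show ?thesis using f1[OF that] by (simp add: ny_def a_def norm_mult)
  qed
  have f3: "bij_betw \<sigma> I J"
  proof (rule bij_betw_imageI)
    show "inj_on \<sigma> I"
    proof (rule inj_onI)
      fix i1 i2 assume h: "i1 \<in> I" "i2 \<in> I" "\<sigma> i1 = \<sigma> i2"
      show "i1 = i2"
      proof (rule ccontr)
        assume "i1 \<noteq> i2"
        then have "A$i2$\<sigma> i1 = 0" using isol[OF f1[OF h(1)]] by auto
        then show False using f1[OF h(2)] h(3) rpos by simp
      qed
    qed
    show "\<sigma> ` I = J"
    proof
      show "\<sigma> ` I \<subseteq> J" using f1' by blast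
      show "J \<subseteq> \<sigma> ` I"
      proof
        fix j assume "j \<in> J"
        then obtain i where i: "norm (A$i$j) = \<rho>" unfolding J_def by blast
        then have iI: "i \<in> I" unfolding I_def by blast
        have "\<sigma> i = j"
        proof (rule ccontr)
          assume "\<sigma> i \<noteq> j"
          then have "A$i$j = 0" using isol[OF f1[OF iI]] by auto
          then show False using i rpos by simp
        qed
        then show "j \<in> \<sigma> ` I" using iI by blast
      qed
    qed
  qed
  define T where "T = (\<Sum>j\<in>-J. a j)"
  have f5: "ny i \<le> c * T" if "i \<notin> I" for i
  proof -
    have z: "A$i$j = 0" if "j \<in> J" for j
    proof -
      obtain i' where i': "norm (A$i'$j) = \<rho>" using \<open>j \<in> J\<close> unfolding J_def by blast
      then have "i' \<noteq> i" using \<open>i \<notin> I\<close> unfolding I_def by blast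
      then show ?thesis using isol[OF i'] by auto
    qed
    have "(\<Sum>k\<in>UNIV. A$i$k * x$k) = (\<Sum>k\<in>-J. A$i$k * x$k)"
      using z by (intro sum.mono_neutral_right) auto
    then have "ny i = norm (\<Sum>k\<in>-J. A$i$k * x$k)" by (simp add: ny_def matrix_vector_mult_def)
    also have "\<dots> \<le> (\<Sum>k\<in>-J. norm (A$i$k) * a k)"
      by (rule order_trans[OF norm_sum]) (simp add: norm_mult a_def)
    also have "\<dots> \<le> (\<Sum>k\<in>-J. c * a k)"
    proof (intro sum_mono mult_right_mono a0)
      fix k show "norm (A$i$k) \<le> c" using \<open>i \<notin> I\<close> c(2) unfolding I_def by blast
    qed
    finally show ?thesis by (simp add: T_def sum_distrib_left)
  qed
  define U where "U = (\<Sum>j\<in>J. a j powr P)"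
  define V where "V = (\<Sum>j\<in>-J. a j powr P)"
  have U0: "U \<ge> 0" and V0: "V \<ge> 0" unfolding U_def V_def by (auto intro: sum_nonneg)
  define m where "m = real CARD('m)"
  define n where "n = real CARD('n)"
  have m0: "m > 0" and n0: "n > 0" unfolding m_def n_def by auto
  have sI: "(\<Sum>i\<in>I. ny i powr Q) \<le> \<rho> powr Q * U powr (Q/P)"
  proof -
    have "(\<Sum>i\<in>I. ny i powr Q) = (\<Sum>i\<in>I. \<rho> powr Q * a (\<sigma> i) powr Q)"
      using rpos a0 by (intro sum.cong) (auto simp: f2 powr_mult)
    also have "\<dots> = \<rho> powr Q * (\<Sum>i\<in>I. a (\<sigma> i) powr Q)" by (simp add: sum_distrib_left)
    also have "(\<Sum>i\<in>I. a (\<sigma> i) powr Q) = (\<Sum>j\<in>J. a j powr Q)"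
      using sum.reindex_bij_betw[OF f3, of "\<lambda>j. a j powr Q"] by simp
    also have "\<dots> \<le> U powr (Q/P)" unfolding U_def
      using P PQ a0 by (intro lp_mono_sum') auto
    finally show ?thesis using rpos by (simp add: mult_left_mono)
  qed
  define D where "D = c * m powr (1 - 1/P) * V powr (1/P)"
  have TD: "c * T \<le> D"
  proof -
    have "T \<le> real (card (-J)) powr (1 - 1/P) * V powr (1/P)"
      unfolding T_def V_def using a0 P by (intro sum_le_card_powr) auto
    also have "\<dots> \<le> m powr (1 - 1/P) * V powr (1/P)"
    proof (intro mult_right_mono powr_mono2)
      show "real (card (-J)) \<le> m" unfolding m_def by (simp add: card_mono)
    qed (use P in auto)
    finally show ?thesis unfolding D_def using c(1) by (simp add: mult_left_mono mult.assoc)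
  qed
  have D0: "D \<ge> 0" unfolding D_def using c(1) by simp
  have nD: "n powr (1/Q) * D \<le> \<rho> * V powr (1/P)"
  proof -
    have "n powr (1/Q) * D = (m powr (1 - 1/P) * n powr (1/Q) * c) * V powr (1/P)"
      unfolding D_def by (simp add: algebra_simps)
    also have "\<dots> \<le> \<rho> * V powr (1/P)"
      using ineq unfolding m_def n_def by (intro mult_right_mono) auto
    finally show ?thesis .
  qed
  have sO: "(\<Sum>i\<in>-I. ny i powr Q) \<le> \<rho> powr Q * V powr (Q/P)"
  proof -
    have "(\<Sum>i\<in>-I. ny i powr Q) \<le> (\<Sum>i\<in>-I. D powr Q)"
    proof (intro sum_mono powr_mono2)
      fix i assume "i \<in> -I" then show "ny i \<le> D" using f5 TD by force
    qed (use Q in \<open>auto simp: ny_def\<close>)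
    also have "\<dots> = real (card (-I)) * D powr Q" by simp
    also have "\<dots> \<le> n * D powr Q"
      unfolding n_def by (intro mult_right_mono) (auto simp: card_mono)
    also have "n * D powr Q = (n powr (1/Q) * D) powr Q"
      using n0 D0 Q by (simp add: powr_mult powr_powr)
    also have "\<dots> \<le> (\<rho> * V powr (1/P)) powr Q"
      using nD D0 n0 Q by (intro powr_mono2) auto
    also have "\<dots> = \<rho> powr Q * V powr (Q/P)"
      using rpos V0 by (simp add: powr_mult powr_powr)
    finally show ?thesis .
  qed
  have split: "(\<Sum>i\<in>UNIV. ny i powr Q) = (\<Sum>i\<in>I. ny i powr Q) + (\<Sum>i\<in>-I. ny i powr Q)"
    using sum.union_disjoint[of I "-I" "\<lambda>i. ny i powr Q"] by (simp add: Compl_partition)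
  have UV: "U + V = (\<Sum>j\<in>UNIV. a j powr P)"
    using sum.union_disjoint[of J "-J" "\<lambda>j. a j powr P"] unfolding U_def V_def by (simp add: Compl_partition)
  have "(\<Sum>i\<in>UNIV. ny i powr Q) \<le> \<rho> powr Q * (U powr (Q/P) + V powr (Q/P))"
    using split sI sO by (simp add: distrib_left)
  also have "\<dots> \<le> \<rho> powr Q * (U + V) powr (Q/P)"
    using U0 V0 P PQ rpos by (intro mult_left_mono powr_superadd) auto
  finally have tot: "(\<Sum>i\<in>UNIV. ny i powr Q) \<le> \<rho> powr Q * (U + V) powr (Q/P)" .
  have "(\<Sum>i\<in>UNIV. ny i powr Q) powr (1/Q) \<le> (\<rho> powr Q * (U + V) powr (Q/P)) powr (1/Q)"
    using tot Q by (intro powr_mono2) (auto simp: ny_def intro: sum_nonneg)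
  also have "\<dots> = \<rho> * (U + V) powr (1/P)"
    using rpos U0 V0 Q P by (simp add: powr_mult powr_powr)
  finally show ?thesis unfolding UV ny_def a_def .
qed



lemma powr_le_exp_aux:
  fixes N e t :: real
  assumes N: "1 \<le> N" and e: "0 \<le> e" "e \<le> t / (ln N + 1)" and t: "0 \<le> t"
  shows "N powr e \<le> exp t"
proof -
  have l0: "0 \<le> ln N" using N by simp
  have "e * ln N \<le> t / (ln N + 1) * ln N" using e l0 by (intro mult_right_mono) auto
  also have "\<dots> \<le> t" using l0 t by (simp add: field_simps)
  finally show ?thesis using N by (simp add: powr_def)
qed

lemma zero_axis: "(0::'a::zero^'k) = axis i 0"
  by (simp add: vec_eq_iff axis_def)

lemma lpnorm_zero: "1 \<le> p \<Longrightarrow> lpnorm p (0::'a::real_normed_vector^'k) = 0"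
  by (metis lpnorm_axis norm_zero zero_axis)

lemma second_part:
  fixes c \<rho> :: real and m n :: nat
  assumes c0: "0 \<le> c" and cr: "c < \<rho> \<or> c = 0" and r0: "0 \<le> \<rho>" and m: "m > 0" and n: "n > 0"
  shows "\<exists>\<delta>>0. \<exists>Q::real. \<forall>p' q'::ereal. 1 < p' \<and> p' < 1 + ereal \<delta> \<and> ereal Q < q' \<and> q' < \<infinity> \<longrightarrow>
            real m powr (1 - ereal_recip p') * real n powr (ereal_recip q') * c \<le> \<rho>"
proof (cases "c = 0")
  case True
  then show ?thesis using r0 by (intro exI[of _ 1]) auto
next
  case False
  then have cpos: "c > 0" and cr: "c < \<rho>" using c0 cr by auto
  define L where "L = ln (\<rho> / c)"
  have L: "L > 0" unfolding L_def using cpos cr by simp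
  define M where "M = real m" define N where "N = real n"
  have M: "1 \<le> M" and N: "1 \<le> N" using m n unfolding M_def N_def by auto
  define \<delta> where "\<delta> = (L/2) / (ln M + 1)"
  define Q0 where "Q0 = 2 * (ln N + 1) / L"
  have lM: "0 \<le> ln M" and lN: "0 \<le> ln N" using M N by auto
  have \<delta>: "\<delta> > 0" unfolding \<delta>_def using L lM by simp
  have Q0: "Q0 > 0" unfolding Q0_def using L lN by simp
  show ?thesis
  proof (rule exI[of _ \<delta>], intro conjI \<delta>, rule exI[of _ Q0], intro allI impI)
    fix p' q' :: ereal
    assume h: "1 < p' \<and> p' < 1 + ereal \<delta> \<and> ereal Q0 < q' \<and> q' < \<infinity>"
    obtain P' where P': "p' = ereal P'" "1 < P'" "P' < 1 + \<delta>" using h by (cases p') auto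
    obtain Q' where Q': "q' = ereal Q'" "Q0 < Q'" using h by (cases q') auto
    have rp: "ereal_recip p' = 1 / P'" and rq: "ereal_recip q' = 1 / Q'"
      using P' Q' by (auto simp: ereal_recip_def)
    have e1: "1 - 1/P' \<le> \<delta>"
    proof -
      have "1 - 1/P' = (P' - 1) / P'" using P' by (simp add: field_simps)
      also have "\<dots> \<le> P' - 1" using divide_left_mono[of 1 P' "P'-1"] P' by simp
      finally show ?thesis using P' by simp
    qed
    have "M powr (1 - 1/P') \<le> exp (L/2)"
      using powr_le_exp_aux[OF M, of "1 - 1/P'" "L/2"] e1 P' L unfolding \<delta>_def by simp
    moreover have "N powr (1/Q') \<le> exp (L/2)"
    proof (rule powr_le_exp_aux[OF N])
      show "0 \<le> 1/Q'" using Q' Q0 by simp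
      have "1/Q' \<le> 1/Q0" using Q' Q0 by (simp add: frac_le)
      also have "1/Q0 = L / 2 / (ln N + 1)" unfolding Q0_def by simp
      finally show "1/Q' \<le> L / 2 / (ln N + 1)" .
    qed (use L in auto)
    ultimately have "M powr (1 - 1/P') * N powr (1/Q') \<le> exp (L/2) * exp (L/2)"
      by (intro mult_mono) auto
    also have "\<dots> = \<rho> / c" unfolding L_def using cpos cr by (simp flip: exp_add)
    finally have "M powr (1 - 1/P') * N powr (1/Q') * c \<le> \<rho> / c * c"
      using cpos by (intro mult_right_mono) auto
    then show "real m powr (1 - ereal_recip p') * real n powr (ereal_recip q') * c \<le> \<rho>"
      using cpos unfolding rp rq M_def N_def by simp
  qed
qed



theorem mainTheorem6:
  fixes A :: "('a::real_normed_field)^'m^'n" and p q :: ereal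
  defines "\<rho> \<equiv> opnorm 1 \<infinity> A"
  defines "C \<equiv> (\<chi> i j. if norm (A $ i $ j) = \<rho> then 0 else A $ i $ j) :: 'a^'m^'n"
  assumes isol: "\<And>i j. norm (A $ i $ j) = \<rho> \<Longrightarrow>
                    (\<forall>j'. j' \<noteq> j \<longrightarrow> A $ i $ j' = 0) \<and> (\<forall>i'. i' \<noteq> i \<longrightarrow> A $ i' $ j = 0)"
    and p: "1 < p" and q: "1 \<le> q" "q < \<infinity>" and pq: "p \<le> q"
    and ineq: "real CARD('m) powr (1 - ereal_recip p) * real CARD('n) powr (ereal_recip q)
                 * opnorm 1 \<infinity> C \<le> \<rho>"
  shows "A \<in> E1inf p q \<and>
         (\<exists>\<delta>>0. \<exists>Q::real. \<forall>p' q'::ereal. 1 < p' \<and> p' < 1 + ereal \<delta> \<and> ereal Q < q' \<and> q' < \<infinity> \<longrightarrow>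
            real CARD('m) powr (1 - ereal_recip p') * real CARD('n) powr (ereal_recip q')
              * opnorm 1 \<infinity> C \<le> \<rho>)"
proof -
  have rho: "\<rho> = maxent A" unfolding \<rho>_def by (rule opnorm_1_inf)
  define c where "c = opnorm 1 \<infinity> C"
  have cC: "c = maxent C" unfolding c_def by (rule opnorm_1_inf)
  have r0: "0 \<le> \<rho>" using rho maxent_nonneg by simp
  have c0: "0 \<le> c" using cC maxent_nonneg by simp
  have cA: "norm (A$i$j) \<le> c" if "norm (A$i$j) \<noteq> \<rho>" for i j
    using maxent_ge[of C i j] that unfolding cC C_def by simp
  obtain P where Pp: "p = ereal P" and P: "1 < P" using p pq q by (cases p) auto
  obtain Q where Qq: "q = ereal Q" and PQ: "P \<le> Q" using q pq Pp by (cases q) auto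
  have rp: "ereal_recip p = 1/P" and rq: "ereal_recip q = 1/Q" using Pp Qq by (auto simp: ereal_recip_def)
  have p1: "1 \<le> p" using p by simp
  have bnd: "lpnorm q (A *v x) \<le> \<rho> * lpnorm p x" for x
  proof (cases "\<rho> = 0")
    case True
    then have "A $ i $ j = 0" for i j using maxent_ge[of A i j] rho by simp
    then have "A *v x = 0" by (simp add: vec_eq_iff matrix_vector_mult_def)
    then show ?thesis using True q by (simp add: lpnorm_zero)
  next
    case False
    then have rpos: "\<rho> > 0" using r0 by simp
    have "(\<Sum>i\<in>UNIV. norm ((A *v x)$i) powr Q) powr (1/Q) \<le> \<rho> * (\<Sum>j\<in>UNIV. norm (x$j) powr P) powr (1/P)"
      by (rule main_bound[OF rpos isol P PQ c0 cA]) (use ineq in \<open>simp_all add: rp rq c_def\<close>)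
    then show ?thesis using Pp Qq by (simp add: lpnorm_fin)
  qed
  obtain i0 j0 where ij: "norm (A $ i0 $ j0) = \<rho>" using maxent_attained rho by metis
  have Ax0: "A *v axis j0 1 = axis i0 (A $ i0 $ j0)"
  proof -
    have "(A *v axis j0 1) $ i = axis i0 (A $ i0 $ j0) $ i" for i
      unfolding mat_axis using isol[OF ij] by (auto simp: axis_def)
    then show ?thesis by (simp add: vec_eq_iff)
  qed
  have x0: "axis j0 (1::'a) \<noteq> 0" by (simp add: axis_eq_0_iff)
  have att: "lpnorm s (A *v axis j0 1) = \<rho> * lpnorm r (axis j0 (1::'a))" if "1 \<le> r" "1 \<le> s" for r s
    using that by (simp add: Ax0 lpnorm_axis ij)
  have Apq: "opnorm p q A = \<rho>"
    using opnorm_eqI[OF p1 _ x0 att[OF p1 q(1)]] bnd by blast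
  have E: "A \<in> E1inf p q"
    unfolding E1inf_def
  proof (intro CollectI allI impI, elim conjE)
    fix r s :: ereal assume r: "1 \<le> r" "r < p" and s: "q < s" "s \<le> \<infinity>"
    have rfin: "r \<noteq> \<infinity>" using r by auto
    have s1: "1 \<le> s" using s q by simp
    have "lpnorm s (A *v x) \<le> \<rho> * lpnorm r x" if "x \<noteq> 0" for x
    proof -
      have "lpnorm s (A *v x) \<le> lpnorm q (A *v x)" using q s by (intro lpnorm_mono) auto
      also have "\<dots> \<le> \<rho> * lpnorm p x" by (rule bnd)
      also have "\<dots> \<le> \<rho> * lpnorm r x" using r rfin r0 by (intro mult_left_mono lpnorm_mono) auto
      finally show ?thesis .
    qed
    then have "opnorm r s A = \<rho>" using opnorm_eqI[OF r(1) _ x0 att[OF r(1) s1]] by blast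
    then show "opnorm r s A = opnorm p q A" using Apq by simp
  qed
  have ccr: "c < \<rho> \<or> c = 0"
  proof (cases "c = 0")
    case False
    obtain i j where "norm (C $ i $ j) = c" using maxent_attained cC by metis
    then have "norm (A$i$j) \<noteq> \<rho>" "norm (A$i$j) = c" using False unfolding C_def by (auto split: if_splits)
    moreover have "norm (A$i$j) \<le> \<rho>" using maxent_ge rho by simp
    ultimately show ?thesis by simp
  qed simp
  show ?thesis using E second_part[OF c0 ccr r0, of "CARD('m)" "CARD('n)"] unfolding c_def by simp
qed


end
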